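(* For any pure state $\ket\Psi\in\mathcal H_A\otimes\mathcal H_B\otimes\mathcal H_C$ (finite-dimensional), $G(A:B:C)_{\ket\Psi}\le S_0(A)+S_2(B)$, where $S_0(A)=\log\operatorname{rank}\rho_A$ and $S_2(B)=-\log\operatorname{tr}\rho_B^2$, with $\rho_A,\rho_B$ the reduced density matrices of $\ket\Psi$.
   Context: For a subsystem $X$ and $\pi\in S_n$, $\pi_X$ permutes the $n$ copies of $\mathcal H_X$ according to $\pi$ and acts trivially otherwise. $\pi^{(1)}=(12)(34)$, $\pi^{(2)}=(13)(24)$, $\pi^{(3)}=(14)(23)\in S_4$; $Z(A:B:C)_{\ket\Psi}=\bra\Psi^{\otimes4}(\pi^{(1)}_A\otimes\pi^{(2)}_B\otimes\pi^{(3)}_C)\ket\Psi^{\otimes4}$ (a positive real number) and $G(A:B:C)_{\ket\Psi}=-\tfrac12\log Z(A:B:C)_{\ket\Psi}$. *)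

theory Defs
  imports "HOL-Analysis.Analysis" "HOL-Library.FuncSet" "HOL-Combinatorics.Transposition"
begin

text \<open>A vector of H_A (x) H_B (x) H_C with finite-dimensional factors is represented by its
  coefficients psi a b c in the product of the computational bases (index types 'a,'b,'c).\<close>

definition is_pure_state :: "('a::finite \<Rightarrow> 'b::finite \<Rightarrow> 'c::finite \<Rightarrow> complex) \<Rightarrow> bool" where
  "is_pure_state \<psi> \<longleftrightarrow> (\<Sum>a\<in>UNIV. \<Sum>b\<in>UNIV. \<Sum>c\<in>UNIV. (cmod (\<psi> a b c))\<^sup>2) = 1"

text \<open>Configurations of n copies: basis labels of (H_A (x) H_B (x) H_C)^(x n),
  copies indexed by 0..n-1.\<close>
definition configs :: "nat \<Rightarrow> (nat \<Rightarrow> 'a \<times> 'b \<times> 'c) set" where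
  "configs n = PiE {..<n} (\<lambda>_. UNIV)"

definition tensor_pow :: "('a \<Rightarrow> 'b \<Rightarrow> 'c \<Rightarrow> complex) \<Rightarrow> nat \<Rightarrow> (nat \<Rightarrow> 'a \<times> 'b \<times> 'c) \<Rightarrow> complex" where
  "tensor_pow \<psi> n y = (\<Prod>k<n. \<psi> (fst (y k)) (fst (snd (y k))) (snd (snd (y k))))"

text \<open>The operator pi_A (x) sigma_B (x) tau_C on n copies: pi_X sends the basis vector
  |x_1 ... x_n> of H_X^(x n) to |x_(pi^-1 1) ... x_(pi^-1 n)>, so on coefficients
  (pi v)(y) = v(y o pi), componentwise on the A, B, C labels.\<close>
definition perm_op :: "(nat \<Rightarrow> nat) \<Rightarrow> (nat \<Rightarrow> nat) \<Rightarrow> (nat \<Rightarrow> nat) \<Rightarrow>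
    ((nat \<Rightarrow> 'a \<times> 'b \<times> 'c) \<Rightarrow> complex) \<Rightarrow> (nat \<Rightarrow> 'a \<times> 'b \<times> 'c) \<Rightarrow> complex" where
  "perm_op \<pi>A \<pi>B \<pi>C v y =
     v (\<lambda>k. (fst (y (\<pi>A k)), fst (snd (y (\<pi>B k))), snd (snd (y (\<pi>C k)))))"

definition pi1 :: "nat \<Rightarrow> nat" where "pi1 = Transposition.transpose 0 1 \<circ> Transposition.transpose 2 3"
definition pi2 :: "nat \<Rightarrow> nat" where "pi2 = Transposition.transpose 0 2 \<circ> Transposition.transpose 1 3"
definition pi3 :: "nat \<Rightarrow> nat" where "pi3 = Transposition.transpose 0 3 \<circ> Transposition.transpose 1 2"

definition Z_ABC :: "('a::finite \<Rightarrow> 'b::finite \<Rightarrow> 'c::finite \<Rightarrow> complex) \<Rightarrow> complex" where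
  "Z_ABC \<psi> = (\<Sum>y\<in>configs 4. cnj (tensor_pow \<psi> 4 y) * perm_op pi1 pi2 pi3 (tensor_pow \<psi> 4) y)"

text \<open>G = -(1/2) log Z; Z is a positive real, we take its real part. Logarithms base 2.\<close>
definition G_ABC :: "('a::finite \<Rightarrow> 'b::finite \<Rightarrow> 'c::finite \<Rightarrow> complex) \<Rightarrow> real" where
  "G_ABC \<psi> = - (1/2) * log 2 (Re (Z_ABC \<psi>))"

definition rho_A :: "('a::finite \<Rightarrow> 'b::finite \<Rightarrow> 'c::finite \<Rightarrow> complex) \<Rightarrow> complex^'a^'a" where
  "rho_A \<psi> = (\<chi> a a'. \<Sum>b\<in>UNIV. \<Sum>c\<in>UNIV. \<psi> a b c * cnj (\<psi> a' b c))"

definition rho_B :: "('a::finite \<Rightarrow> 'b::finite \<Rightarrow> 'c::finite \<Rightarrow> complex) \<Rightarrow> complex^'b^'b" where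
  "rho_B \<psi> = (\<chi> b b'. \<Sum>a\<in>UNIV. \<Sum>c\<in>UNIV. \<psi> a b c * cnj (\<psi> a b' c))"

definition S0_A :: "('a::finite \<Rightarrow> 'b::finite \<Rightarrow> 'c::finite \<Rightarrow> complex) \<Rightarrow> real" where
  "S0_A \<psi> = log 2 (real (rank (rho_A \<psi>)))"

definition S2_B :: "('a::finite \<Rightarrow> 'b::finite \<Rightarrow> 'c::finite \<Rightarrow> complex) \<Rightarrow> real" where
  "S2_B \<psi> = - log 2 (Re (trace (rho_B \<psi> ** rho_B \<psi>)))"

end

theory Submission
  imports Defs
begin

definition cinner :: "complex^'n \<Rightarrow> complex^'n \<Rightarrow> complex" where
  "cinner u v = (\<Sum>i\<in>UNIV. cnj (u$i) * v$i)"

lemma cinner_sum_right: "cinner u (\<Sum>x\<in>A. f x) = (\<Sum>x\<in>A. cinner u (f x))"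
  by (simp add: cinner_def sum_distrib_left sum.swap[of _ A])

lemma cinner_sum_left: "cinner (\<Sum>x\<in>A. f x) v = (\<Sum>x\<in>A. cinner (f x) v)"
  by (simp add: cinner_def sum_distrib_right sum.swap[of _ A] cnj_sum)

lemma cinner_scale_right[simp]: "cinner u (c *s v) = c * cinner u v"
  by (simp add: cinner_def sum_distrib_left mult_ac)

lemma cinner_scale_left[simp]: "cinner (c *s u) v = cnj c * cinner u v"
  by (simp add: cinner_def sum_distrib_left mult_ac)

lemma cinner_diff_right[simp]: "cinner u (v - w) = cinner u v - cinner u w"
  by (simp add: cinner_def algebra_simps sum_subtractf)

lemma cinner_diff_left[simp]: "cinner (v - w) u = cinner v u - cinner w u"
  by (simp add: cinner_def algebra_simps sum_subtractf)

lemma cinner_commute: "cinner v u = cnj (cinner u v)"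
  by (simp add: cinner_def cnj_sum mult.commute)

lemma cinner_self: "cinner v v = of_real (\<Sum>i\<in>UNIV. (cmod (v$i))\<^sup>2)"
proof -
  have "\<And>i. cnj (v$i) * v$i = of_real ((cmod (v$i))^2)" by (simp only: complex_norm_square mult.commute)
  then show ?thesis unfolding cinner_def of_real_sum by (rule sum.cong[OF refl])
qed

lemma cinner_self_eq_0: "cinner v v = 0 \<longleftrightarrow> v = 0"
proof
  assume "cinner v v = 0"
  then have "of_real (\<Sum>i\<in>UNIV. (cmod (v$i))\<^sup>2) = (0::complex)" by (simp only: cinner_self)
  then have "(\<Sum>i\<in>UNIV. (cmod (v$i))\<^sup>2) = 0" by (simp only: of_real_eq_0_iff)
  then have "\<forall>i\<in>UNIV. (cmod (v$i))\<^sup>2 = 0" by (subst (asm) sum_nonneg_eq_0_iff) auto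
  then show "v = 0" by (simp add: vec_eq_iff)
qed (simp add: cinner_def)

lemma orthonormal_independent:
  assumes on: "\<forall>u\<in>U. \<forall>v\<in>U. cinner u v = (if u = v then 1 else 0)"
  shows "vec.independent (U :: (complex^'n) set)"
  unfolding vec.dependent_explicit
proof clarify
  fix t c v assume t: "finite t" "t \<subseteq> U" "(\<Sum>v\<in>t. c v *s v) = 0" "v \<in> t" "c v \<noteq> 0"
  have "0 = cinner v (\<Sum>w\<in>t. c w *s w)" using t by (simp add: cinner_def)
  also have "\<dots> = (\<Sum>w\<in>t. c w * cinner v w)" by (simp add: cinner_sum_right)
  also have "\<dots> = (\<Sum>w\<in>t. if w = v then c w else 0)"
  proof (rule sum.cong)
    fix w assume "w \<in> t"
    then have "w \<in> U" "v \<in> U" using t by auto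
    then show "c w * cinner v w = (if w = v then c w else 0)" using on by auto
  qed simp
  also have "\<dots> = c v" using t by simp
  finally show False using t by simp
qed

lemma cinner_on_sum:
  assumes on: "\<forall>u\<in>U. \<forall>v\<in>U. cinner u v = (if u = v then 1 else 0)" and fin: "finite U" and u: "u \<in> U"
  shows "cinner u (\<Sum>w\<in>U. c w *s w) = c u"
proof -
  have "cinner u (\<Sum>w\<in>U. c w *s w) = (\<Sum>w\<in>U. c w * cinner u w)" by (simp add: cinner_sum_right)
  also have "\<dots> = (\<Sum>w\<in>U. if w = u then c w else 0)"
  proof (rule sum.cong)
    fix w assume "w \<in> U"
    then show "c w * cinner u w = (if w = u then c w else 0)" using on u by auto
  qed simp
  also have "\<dots> = c u" using fin u by simp
  finally show ?thesis .
qed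

lemma gram_schmidt:
  fixes S :: "(complex^'n) set"
  assumes "finite S"
  shows "\<exists>U. finite U \<and> U \<subseteq> vec.span S \<and> (\<forall>u\<in>U. \<forall>v\<in>U. cinner u v = (if u = v then 1 else 0))
     \<and> (\<forall>s\<in>S. s = (\<Sum>u\<in>U. cinner u s *s u))"
  using assms
proof (induction S rule: finite_induct)
  case empty
  show ?case by (intro exI[of _ "{}"]) auto
next
  case (insert v S)
  then obtain U where fin: "finite U" and sp: "U \<subseteq> vec.span S"
    and on: "\<forall>u\<in>U. \<forall>v\<in>U. cinner u v = (if u = v then 1 else 0)"
    and ex: "\<forall>s\<in>S. s = (\<Sum>u\<in>U. cinner u s *s u)" by blast
  define w where "w = v - (\<Sum>u\<in>U. cinner u v *s u)"
  have spU: "U \<subseteq> vec.span (insert v S)" using sp vec.span_mono[of S "insert v S"] by blast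
  have w_orth: "cinner u w = 0" if "u \<in> U" for u
    using cinner_on_sum[OF on fin that, of "\<lambda>u. cinner u v"] by (simp add: w_def)
  show ?case
  proof (cases "w = 0")
    case True
    show ?thesis
    proof (intro exI[of _ U] conjI)
      show "\<forall>s\<in>insert v S. s = (\<Sum>u\<in>U. cinner u s *s u)"
        using ex True by (auto simp: w_def)
    qed (use fin spU on in auto)
  next
    case False
    define N where "N = (\<Sum>i\<in>UNIV. (cmod (w$i))\<^sup>2)"
    have wwN: "cinner w w = of_real N" by (simp add: N_def cinner_self)
    have Npos: "N > 0"
    proof -
      have "N \<ge> 0" unfolding N_def by (intro sum_nonneg) auto
      moreover have "N \<noteq> 0" using False wwN cinner_self_eq_0[of w] by auto
      ultimately show ?thesis by simp
    qed
    define e where "e = complex_of_real (1 / sqrt N) *s w"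
    have sq: "(complex_of_real (sqrt N))^2 = complex_of_real N"
      using Npos by (simp flip: of_real_power)
    have ee: "cinner e e = 1"
      using Npos sq by (simp add: e_def wwN power2_eq_square[symmetric] flip: of_real_mult)
    have eu: "cinner u e = 0" if "u \<in> U" for u
      using w_orth[OF that] by (simp add: e_def)
    have ue: "cinner e u = 0" if "u \<in> U" for u
      using eu[OF that] cinner_commute[of e u] by simp
    have enU: "e \<notin> U" using ee eu by force
    have w_span: "w \<in> vec.span (insert v S)"
      unfolding w_def
    proof (intro vec.span_diff vec.span_sum vec.span_scale)
      show "v \<in> vec.span (insert v S)" by (simp add: vec.span_base)
    qed (use spU in auto)
    have e_span: "e \<in> vec.span (insert v S)"
      unfolding e_def by (intro vec.span_scale w_span)
    let ?U = "insert e U"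
    have on2: "\<forall>u\<in>?U. \<forall>x\<in>?U. cinner u x = (if u = x then 1 else 0)"
      using on ee eu ue by auto
    have sum_ins: "(\<Sum>u\<in>?U. cinner u s *s u) = cinner e s *s e + (\<Sum>u\<in>U. cinner u s *s u)" for s
      using fin enU by simp
    show ?thesis
    proof (intro exI[of _ ?U] conjI)
      show "finite ?U" using fin by simp
      show "?U \<subseteq> vec.span (insert v S)" using spU e_span by auto
      show "\<forall>u\<in>?U. \<forall>x\<in>?U. cinner u x = (if u = x then 1 else 0)" by (rule on2)
      show "\<forall>s\<in>insert v S. s = (\<Sum>u\<in>?U. cinner u s *s u)"
      proof
        fix s assume s: "s \<in> insert v S"
        show "s = (\<Sum>u\<in>?U. cinner u s *s u)"
        proof (cases "s = v")
          case True
          have v_eq: "v = w + (\<Sum>u\<in>U. cinner u v *s u)" by (simp add: w_def)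
          have "cinner e v = cinner e w + cinner e (\<Sum>u\<in>U. cinner u v *s u)"
            by (simp add: w_def)
          also have "cinner e (\<Sum>u\<in>U. cinner u v *s u) = 0"
            by (simp add: cinner_sum_right ue)
          finally have "cinner e v = cinner e w" by simp
          moreover have "cinner e w *s e = w"
            using Npos sq by (simp add: e_def wwN vec_eq_iff field_simps power2_eq_square[symmetric]
              flip: of_real_mult)
          ultimately show ?thesis using True sum_ins[of v] v_eq by simp
        next
          case False
          then have "s \<in> S" using s by simp
          then have s_eq: "s = (\<Sum>u\<in>U. cinner u s *s u)" using ex by blast
          have "cinner e s = 0"
            by (subst s_eq) (simp add: cinner_sum_right ue)
          then show ?thesis using sum_ins[of s] s_eq by simp
        qed
      qed
    qed
  qed
qed

lemma swap3: "(\<Sum>c\<in>C. \<Sum>j\<in>J. \<Sum>i\<in>I. f c j i) = (\<Sum>j\<in>J. \<Sum>i\<in>I. \<Sum>c\<in>C. f c j i)"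
  by (subst sum.swap) (rule sum.cong[OF refl], rule sum.swap)

lemma rot4: "(\<Sum>b\<in>B. \<Sum>c\<in>C. \<Sum>j\<in>J. \<Sum>i\<in>I. f b c j i) = (\<Sum>j\<in>J. \<Sum>i\<in>I. \<Sum>b\<in>B. \<Sum>c\<in>C. f b c j i)"
proof -
  have "(\<Sum>b\<in>B. \<Sum>c\<in>C. \<Sum>j\<in>J. \<Sum>i\<in>I. f b c j i) = (\<Sum>b\<in>B. \<Sum>j\<in>J. \<Sum>i\<in>I. \<Sum>c\<in>C. f b c j i)"
    by (rule sum.cong[OF refl], rule swap3)
  also have "\<dots> = (\<Sum>j\<in>J. \<Sum>i\<in>I. \<Sum>b\<in>B. \<Sum>c\<in>C. f b c j i)"
    by (rule swap3)
  finally show ?thesis .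
qed

lemma quad_expand:
  fixes \<psi> :: "'a::finite \<Rightarrow> 'b::finite \<Rightarrow> 'c::finite \<Rightarrow> complex"
  shows "(\<Sum>b\<in>UNIV. \<Sum>c\<in>UNIV. cnj (\<Sum>a\<in>UNIV. \<psi> a b c * d a) * (\<Sum>a\<in>UNIV. \<psi> a b c * d a))
   = (\<Sum>a\<in>UNIV. cnj (d a) * (\<Sum>a'\<in>UNIV. cnj(\<Sum>b\<in>UNIV. \<Sum>c\<in>UNIV. \<psi> a b c * cnj(\<psi> a' b c)) * d a'))"
  apply (simp add: cnj_sum sum_distrib_left sum_distrib_right)
  apply (subst rot4)
  apply (rule trans[OF sum.swap])
  apply (simp add: mult_ac)
  done

lemma sum2_cnj_zero:
  fixes X :: "'b::finite \<Rightarrow> 'c::finite \<Rightarrow> complex"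
  assumes "(\<Sum>b\<in>UNIV. \<Sum>c\<in>UNIV. cnj (X b c) * X b c) = 0"
  shows "X b c = 0"
proof -
  have "\<And>b c. cnj (X b c) * X b c = of_real ((cmod (X b c))^2)"
    by (simp only: complex_norm_square mult.commute)
  then have "of_real (\<Sum>b\<in>UNIV. \<Sum>c\<in>UNIV. (cmod (X b c))^2) = (0::complex)"
    using assms by (simp only: of_real_sum)
  then have s0: "(\<Sum>b\<in>UNIV. \<Sum>c\<in>UNIV. (cmod (X b c))^2) = 0" by (simp only: of_real_eq_0_iff)
  have "\<forall>b\<in>UNIV. (\<Sum>c\<in>UNIV. (cmod (X b c))^2) = 0"
    using s0 by (subst (asm) sum_nonneg_eq_0_iff) (auto intro: sum_nonneg)
  then have "(\<Sum>c\<in>UNIV. (cmod (X b c))^2) = 0" by simp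
  then have "\<forall>c\<in>UNIV. (cmod (X b c))^2 = 0" by (subst (asm) sum_nonneg_eq_0_iff) auto
  then show ?thesis by simp
qed

lemma projector_exists:
  fixes \<psi> :: "'a::finite \<Rightarrow> 'b::finite \<Rightarrow> 'c::finite \<Rightarrow> complex"
  shows "\<exists>P :: 'a \<Rightarrow> 'a \<Rightarrow> complex. (\<forall>a b c. \<psi> a b c = (\<Sum>x\<in>UNIV. P a x * \<psi> x b c))
     \<and> (\<Sum>a\<in>UNIV. \<Sum>x\<in>UNIV. (cmod (P a x))\<^sup>2) \<le> real (rank (rho_A \<psi>))"
proof -
  define S where "S = rows (rho_A \<psi>)"
  have S_eq: "S = range (\<lambda>i. row i (rho_A \<psi>))" by (auto simp: S_def rows_def)
  have finS: "finite S" unfolding S_eq by simp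
  obtain U where fin: "finite U" and sp: "U \<subseteq> vec.span S"
    and on: "\<forall>u\<in>U. \<forall>v\<in>U. cinner u v = (if u = v then 1 else 0)"
    and ex: "\<forall>s\<in>S. s = (\<Sum>u\<in>U. cinner u s *s u)"
    using gram_schmidt[OF finS] by blast
  have indep: "vec.independent U" by (rule orthonormal_independent[OF on])
  have cardU: "card U \<le> rank (rho_A \<psi>)"
  proof -
    have "card U \<le> vec.dim (vec.span S)" by (rule vec.independent_card_le_dim[OF sp indep])
    then show ?thesis by (simp add: row_rank_def_gen S_def)
  qed
  define P where "P a x = (\<Sum>u\<in>U. cnj (u$a) * u$x)" for a x
  have frob_c: "(\<Sum>a\<in>UNIV. \<Sum>x\<in>UNIV. cnj (P a x) * P a x) = (\<Sum>u\<in>U. \<Sum>u'\<in>U. cinner u' u * cinner u u')"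
    unfolding P_def cinner_def
    apply (simp add: cnj_sum sum_distrib_left sum_distrib_right)
    apply (subst rot4)
    apply (simp add: mult_ac)
    done
  also have "\<dots> = (\<Sum>u\<in>U. \<Sum>u'\<in>U. if u' = u then 1 else 0)"
    using on by (intro sum.cong refl) auto
  also have "\<dots> = of_nat (card U)" using fin by simp
  finally have frob_c': "(\<Sum>a\<in>UNIV. \<Sum>x\<in>UNIV. cnj (P a x) * P a x) = of_nat (card U)" .
  have "\<And>a x. cnj (P a x) * P a x = of_real ((cmod (P a x))^2)"
    by (simp only: complex_norm_square mult.commute)
  then have "of_real (\<Sum>a\<in>UNIV. \<Sum>x\<in>UNIV. (cmod (P a x))^2) = (of_nat (card U) :: complex)"
    using frob_c' by (simp only: of_real_sum)
  then have frob: "(\<Sum>a\<in>UNIV. \<Sum>x\<in>UNIV. (cmod (P a x))^2) = real (card U)"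
  proof -
    have "(of_nat (card U)::complex) = of_real (real (card U))" by simp
    then show ?thesis using \<open>of_real _ = _\<close> by (simp only: of_real_eq_iff)
  qed
  have fix_psi: "\<psi> a b c = (\<Sum>x\<in>UNIV. P a x * \<psi> x b c)" for a b c
  proof -
    define m :: "complex^'a" where "m = (\<chi> a. cnj (\<psi> a b c))"
    define d where "d = m - (\<Sum>u\<in>U. cinner u m *s u)"
    have du: "cinner u d = 0" if "u \<in> U" for u
      using cinner_on_sum[OF on fin that, of "\<lambda>u. cinner u m"] by (simp add: d_def)
    have dr: "cinner (row i (rho_A \<psi>)) d = 0" for i
    proof -
      have "row i (rho_A \<psi>) \<in> S" by (simp add: S_eq)
      then have "row i (rho_A \<psi>) = (\<Sum>u\<in>U. cinner u (row i (rho_A \<psi>)) *s u)" using ex by blast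
      then have "cinner (row i (rho_A \<psi>)) d = cinner (\<Sum>u\<in>U. cinner u (row i (rho_A \<psi>)) *s u) d"
        by simp
      also have "\<dots> = 0" by (simp add: cinner_sum_left du)
      finally show ?thesis .
    qed
    have "(\<Sum>b\<in>UNIV. \<Sum>c\<in>UNIV. cnj (\<Sum>a\<in>UNIV. \<psi> a b c * d$a) * (\<Sum>a\<in>UNIV. \<psi> a b c * d$a))
        = (\<Sum>a\<in>UNIV. cnj (d$a) * (\<Sum>a'\<in>UNIV. cnj(\<Sum>b\<in>UNIV. \<Sum>c\<in>UNIV. \<psi> a b c * cnj(\<psi> a' b c)) * d$a'))"
      by (rule quad_expand)
    also have "\<dots> = (\<Sum>a\<in>UNIV. cnj (d$a) * cinner (row a (rho_A \<psi>)) d)"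
      by (simp add: cinner_def row_def rho_A_def)
    also have "\<dots> = 0" by (simp add: dr)
    finally have "(\<Sum>a\<in>UNIV. \<psi> a b c * d$a) = 0" by (rule sum2_cnj_zero)
    then have md: "cinner m d = 0" by (simp add: cinner_def m_def)
    have "cinner d d = cinner m d - cinner (\<Sum>u\<in>U. cinner u m *s u) d"
      by (simp add: d_def)
    also have "\<dots> = 0" by (simp add: md cinner_sum_left du)
    finally have "d = 0" by (simp add: cinner_self_eq_0)
    then have "m = (\<Sum>u\<in>U. cinner u m *s u)" by (simp add: d_def)
    then have "m$a = (\<Sum>u\<in>U. cinner u m *s u)$a" by simp
    then have "cnj (\<psi> a b c) = (\<Sum>u\<in>U. cinner u m * u$a)" by (simp add: m_def)
    then have "\<psi> a b c = (\<Sum>u\<in>U. cnj (cinner u m) * cnj (u$a))"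
      by (metis (no_types, lifting) cnj_sum complex_cnj_cnj complex_cnj_mult sum.cong)
    also have "\<dots> = (\<Sum>u\<in>U. \<Sum>x\<in>UNIV. cnj (u$a) * u$x * \<psi> x b c)"
      by (simp add: cinner_def m_def cnj_sum sum_distrib_right sum_distrib_left mult_ac)
    also have "\<dots> = (\<Sum>x\<in>UNIV. P a x * \<psi> x b c)"
      by (simp add: P_def sum_distrib_right sum.swap[of _ U])
    finally show ?thesis .
  qed
  show ?thesis
    by (intro exI[of _ P] conjI allI fix_psi) (use frob cardU in simp)
qed

lemma sum_UNIV_pair: "sum f (UNIV :: ('x::finite \<times> 'y::finite) set) = (\<Sum>x\<in>UNIV. \<Sum>y\<in>UNIV. f (x,y))"
proof -
  have "(\<Sum>x\<in>UNIV. \<Sum>y\<in>UNIV. f (x,y)) = sum (\<lambda>(x,y). f (x,y)) (UNIV \<times> UNIV)"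
    by (rule sum.cartesian_product)
  then show ?thesis by (simp only: UNIV_Times_UNIV case_prod_eta)
qed

lemma prod4: "(\<Prod>k<4. f k) = f 0 * f 1 * f (2::nat) * (f 3 :: 'a::comm_monoid_mult)"
  by (simp add: numeral_eq_Suc lessThan_Suc mult_ac)

definition Wterm :: "('a::finite \<Rightarrow> 'b::finite \<Rightarrow> 'c::finite \<Rightarrow> complex) \<Rightarrow> 'a \<Rightarrow> 'a \<Rightarrow> 'a \<Rightarrow> 'a \<Rightarrow> 'b \<Rightarrow> 'b \<Rightarrow> 'c \<Rightarrow> 'c \<Rightarrow> complex" where
  "Wterm \<psi> a0 a1 a2 a3 b b' c c' = \<psi> a0 b c * cnj (\<psi> a2 b' c) * \<psi> a1 b' c' * cnj (\<psi> a3 b c')"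

definition Wf :: "('a::finite \<Rightarrow> 'b::finite \<Rightarrow> 'c::finite \<Rightarrow> complex) \<Rightarrow> 'a \<Rightarrow> 'a \<Rightarrow> 'a \<Rightarrow> 'a \<Rightarrow> complex" where
  "Wf \<psi> a0 a1 a2 a3 = (\<Sum>b\<in>UNIV. \<Sum>b'\<in>UNIV. \<Sum>c\<in>UNIV. \<Sum>c'\<in>UNIV. Wterm \<psi> a0 a1 a2 a3 b b' c c')"

definition mk :: "'a \<times> 'a \<times> 'a \<times> 'a \<times> 'b \<times> 'b \<times> 'c \<times> 'c \<times> 'b \<times> 'b \<times> 'c \<times> 'c \<Rightarrow> nat \<Rightarrow> 'a \<times> 'b \<times> 'c" where
  "mk t k = (let (a0,a1,a2,a3,b,b',c,c',B,B',C,C') = t in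
     (if k = 0 then (a0,B,C) else if k = 1 then (a1,B',C') else if k = 2 then (a2,b',c)
          else if k = 3 then (a3,b,c') else undefined))"
definition unmk :: "(nat \<Rightarrow> 'a \<times> 'b \<times> 'c) \<Rightarrow> 'a \<times> 'a \<times> 'a \<times> 'a \<times> 'b \<times> 'b \<times> 'c \<times> 'c \<times> 'b \<times> 'b \<times> 'c \<times> 'c" where
  "unmk y = (fst (y 0), fst (y 1), fst (y 2), fst (y 3), fst (snd (y 3)), fst (snd (y 2)),
     snd (snd (y 2)), snd (snd (y 3)), fst (snd (y 0)), fst (snd (y 1)), snd (snd (y 0)), snd (snd (y 1)))"

lemma configs_reindex:
  "(\<Sum>y\<in>configs 4. g y) = (\<Sum>t\<in>(UNIV :: ('a::finite \<times> 'a \<times> 'a \<times> 'a \<times> 'b::finite \<times> 'b \<times> 'c::finite \<times> 'c \<times> 'b \<times> 'b \<times> 'c \<times> 'c) set). g (mk t))"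
proof -
  have mu: "mk (unmk y) = y" if y: "y \<in> configs 4" for y :: "nat \<Rightarrow> 'a \<times> 'b \<times> 'c"
  proof
    fix k
    show "mk (unmk y) k = y k"
    proof (cases "k < 4")
      case True
      then have "k = 0 \<or> k = 1 \<or> k = 2 \<or> k = 3" by auto
      then show ?thesis by (auto simp: mk_def unmk_def Let_def)
    next
      case False
      then have "y k = undefined" using y by (auto simp: configs_def PiE_def extensional_def)
      then show ?thesis using False by (auto simp: mk_def unmk_def Let_def)
    qed
  qed
  show ?thesis
  proof (rule sum.reindex_bij_witness[of _ mk unmk])
    fix t :: "'a \<times> 'a \<times> 'a \<times> 'a \<times> 'b \<times> 'b \<times> 'c \<times> 'c \<times> 'b \<times> 'b \<times> 'c \<times> 'c"
    show "unmk (mk t) = t" by (simp add: mk_def unmk_def Let_def split: prod.splits)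
    show "mk t \<in> configs 4" by (auto simp: mk_def configs_def PiE_def extensional_def Let_def split: prod.splits)
  qed (auto simp: mu)
qed

lemma pi_vals: "pi1 0 = 1" "pi1 1 = 0" "pi1 2 = 3" "pi1 3 = 2"
  "pi2 0 = 2" "pi2 1 = 3" "pi2 2 = 0" "pi2 3 = 1"
  "pi3 0 = 3" "pi3 1 = 2" "pi3 2 = 1" "pi3 3 = 0"
  by (simp_all add: pi1_def pi2_def pi3_def transpose_def)

lemma mk_vals: "mk (a0,a1,a2,a3,b,b',c,c',B,B',C,C') 0 = (a0,B,C)"
  "mk (a0,a1,a2,a3,b,b',c,c',B,B',C,C') 1 = (a1,B',C')"
  "mk (a0,a1,a2,a3,b,b',c,c',B,B',C,C') 2 = (a2,b',c)"
  "mk (a0,a1,a2,a3,b,b',c,c',B,B',C,C') 3 = (a3,b,c')"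
  by (simp_all add: mk_def)

lemma F_mk:
  fixes \<psi> :: "'a::finite \<Rightarrow> 'b::finite \<Rightarrow> 'c::finite \<Rightarrow> complex"
  shows "cnj (tensor_pow \<psi> 4 (mk (a0,a1,a2,a3,b,b',c,c',B,B',C,C'))) * perm_op pi1 pi2 pi3 (tensor_pow \<psi> 4) (mk (a0,a1,a2,a3,b,b',c,c',B,B',C,C'))
    = Wterm \<psi> a0 a1 a2 a3 b b' c c' * cnj (Wterm \<psi> a0 a1 a2 a3 B B' C C')"
  unfolding tensor_pow_def perm_op_def prod4
  unfolding pi_vals mk_vals fst_conv snd_conv Wterm_def
  by (simp add: mult_ac)

lemma WW_expand:
  "Wf \<psi> a0 a1 a2 a3 * cnj (Wf \<psi> a0 a1 a2 a3) = (\<Sum>b\<in>UNIV. \<Sum>b'\<in>UNIV. \<Sum>c\<in>UNIV. \<Sum>c'\<in>UNIV.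
     \<Sum>B\<in>UNIV. \<Sum>B'\<in>UNIV. \<Sum>C\<in>UNIV. \<Sum>C'\<in>UNIV. Wterm \<psi> a0 a1 a2 a3 b b' c c' * cnj (Wterm \<psi> a0 a1 a2 a3 B B' C C'))"
  unfolding Wf_def cnj_sum
  apply (simp only: sum_distrib_right)
  apply (simp only: sum_distrib_left)
  done

lemma Z_eq:
  fixes \<psi> :: "'a::finite \<Rightarrow> 'b::finite \<Rightarrow> 'c::finite \<Rightarrow> complex"
  shows "Z_ABC \<psi> = (\<Sum>a0\<in>UNIV. \<Sum>a1\<in>UNIV. \<Sum>a2\<in>UNIV. \<Sum>a3\<in>UNIV. Wf \<psi> a0 a1 a2 a3 * cnj (Wf \<psi> a0 a1 a2 a3))"
  unfolding Z_ABC_def WW_expand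
  apply (subst configs_reindex)
  apply (simp only: sum_UNIV_pair F_mk)
  done


lemma rot6: "(\<Sum>b\<in>B1. \<Sum>b'\<in>B2. \<Sum>c\<in>C1. \<Sum>c'\<in>C2. \<Sum>x\<in>X1. \<Sum>x'\<in>X2. f b b' c c' x x')
  = (\<Sum>x\<in>X1. \<Sum>x'\<in>X2. \<Sum>b\<in>B1. \<Sum>b'\<in>B2. \<Sum>c\<in>C1. \<Sum>c'\<in>C2. f b b' c c' x x')"
proof -
  have "(\<Sum>b\<in>B1. \<Sum>b'\<in>B2. \<Sum>c\<in>C1. \<Sum>c'\<in>C2. \<Sum>x\<in>X1. \<Sum>x'\<in>X2. f b b' c c' x x')
    = (\<Sum>b\<in>B1. \<Sum>b'\<in>B2. \<Sum>x\<in>X1. \<Sum>x'\<in>X2. \<Sum>c\<in>C1. \<Sum>c'\<in>C2. f b b' c c' x x')"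
    by (intro sum.cong refl rot4)
  also have "\<dots> = (\<Sum>x\<in>X1. \<Sum>x'\<in>X2. \<Sum>b\<in>B1. \<Sum>b'\<in>B2. \<Sum>c\<in>C1. \<Sum>c'\<in>C2. f b b' c c' x x')"
    by (rule rot4)
  finally show ?thesis .
qed

lemma Wterm_proj:
  fixes \<psi> :: "'a::finite \<Rightarrow> 'b::finite \<Rightarrow> 'c::finite \<Rightarrow> complex"
  assumes fx: "\<And>a b c. \<psi> a b c = (\<Sum>x\<in>UNIV. P a x * \<psi> x b c)"
  shows "Wterm \<psi> a0 a1 a2 a3 b b' c c' = (\<Sum>x\<in>UNIV. \<Sum>x'\<in>UNIV. P a0 x * P a1 x' * Wterm \<psi> x x' a2 a3 b b' c c')"
proof -
  define K where "K = cnj (\<psi> a2 b' c) * cnj (\<psi> a3 b c')"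
  have pp: "\<psi> a0 b c * \<psi> a1 b' c' = (\<Sum>x\<in>UNIV. \<Sum>x'\<in>UNIV. (P a0 x * \<psi> x b c) * (P a1 x' * \<psi> x' b' c'))"
    by (subst fx[of a0], subst fx[of a1], rule sum_product)
  have "Wterm \<psi> a0 a1 a2 a3 b b' c c' = (\<psi> a0 b c * \<psi> a1 b' c') * K"
    by (simp add: Wterm_def K_def mult_ac)
  also have "\<dots> = (\<Sum>x\<in>UNIV. \<Sum>x'\<in>UNIV. (P a0 x * \<psi> x b c) * (P a1 x' * \<psi> x' b' c')) * K"
    by (simp only: pp)
  also have "\<dots> = (\<Sum>x\<in>UNIV. \<Sum>x'\<in>UNIV. (P a0 x * \<psi> x b c) * (P a1 x' * \<psi> x' b' c') * K)"
    by (simp only: sum_distrib_right)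
  also have "\<dots> = (\<Sum>x\<in>UNIV. \<Sum>x'\<in>UNIV. P a0 x * P a1 x' * Wterm \<psi> x x' a2 a3 b b' c c')"
    by (simp add: Wterm_def K_def mult_ac)
  finally show ?thesis .
qed

lemma Wf_proj:
  fixes \<psi> :: "'a::finite \<Rightarrow> 'b::finite \<Rightarrow> 'c::finite \<Rightarrow> complex"
  assumes fx: "\<And>a b c. \<psi> a b c = (\<Sum>x\<in>UNIV. P a x * \<psi> x b c)"
  shows "Wf \<psi> a0 a1 a2 a3 = (\<Sum>x\<in>UNIV. \<Sum>x'\<in>UNIV. P a0 x * P a1 x' * Wf \<psi> x x' a2 a3)"
proof -
  have "Wf \<psi> a0 a1 a2 a3 = (\<Sum>b\<in>UNIV. \<Sum>b'\<in>UNIV. \<Sum>c\<in>UNIV. \<Sum>c'\<in>UNIV. \<Sum>x\<in>UNIV. \<Sum>x'\<in>UNIV.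
      P a0 x * P a1 x' * Wterm \<psi> x x' a2 a3 b b' c c')"
    unfolding Wf_def by (intro sum.cong refl) (rule Wterm_proj[OF fx])
  also have "\<dots> = (\<Sum>x\<in>UNIV. \<Sum>x'\<in>UNIV. \<Sum>b\<in>UNIV. \<Sum>b'\<in>UNIV. \<Sum>c\<in>UNIV. \<Sum>c'\<in>UNIV.
      P a0 x * P a1 x' * Wterm \<psi> x x' a2 a3 b b' c c')"
    by (rule rot6)
  also have "\<dots> = (\<Sum>x\<in>UNIV. \<Sum>x'\<in>UNIV. P a0 x * P a1 x' * Wf \<psi> x x' a2 a3)"
    unfolding Wf_def by (simp only: sum_distrib_left)
  finally show ?thesis .
qed

lemma trace_eq:
  fixes \<psi> :: "'a::finite \<Rightarrow> 'b::finite \<Rightarrow> 'c::finite \<Rightarrow> complex"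
  shows "trace (rho_B \<psi> ** rho_B \<psi>) = (\<Sum>a\<in>UNIV. \<Sum>a'\<in>UNIV. Wf \<psi> a a' a a')"
proof -
  have "trace (rho_B \<psi> ** rho_B \<psi>) = (\<Sum>b\<in>UNIV. \<Sum>b'\<in>UNIV.
      (\<Sum>a\<in>UNIV. \<Sum>c\<in>UNIV. \<psi> a b c * cnj (\<psi> a b' c)) * (\<Sum>a'\<in>UNIV. \<Sum>c'\<in>UNIV. \<psi> a' b' c' * cnj (\<psi> a' b c')))"
    by (simp add: trace_def matrix_matrix_mult_def rho_B_def)
  also have "\<dots> = (\<Sum>b\<in>UNIV. \<Sum>b'\<in>UNIV. \<Sum>a\<in>UNIV. \<Sum>a'\<in>UNIV. \<Sum>c\<in>UNIV. \<Sum>c'\<in>UNIV.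
      (\<psi> a b c * cnj (\<psi> a b' c)) * (\<psi> a' b' c' * cnj (\<psi> a' b c')))"
    by (simp only: sum_product)
  also have "\<dots> = (\<Sum>a\<in>UNIV. \<Sum>a'\<in>UNIV. \<Sum>b\<in>UNIV. \<Sum>b'\<in>UNIV. \<Sum>c\<in>UNIV. \<Sum>c'\<in>UNIV.
      (\<psi> a b c * cnj (\<psi> a b' c)) * (\<psi> a' b' c' * cnj (\<psi> a' b c')))"
    by (rule rot4)
  also have "\<dots> = (\<Sum>a\<in>UNIV. \<Sum>a'\<in>UNIV. Wf \<psi> a a' a a')"
    by (simp add: Wf_def Wterm_def mult_ac)
  finally show ?thesis .
qed


lemma double_sum_ge:
  fixes f :: "'x::finite \<Rightarrow> 'y::finite \<Rightarrow> real"
  assumes nn: "\<And>x y. 0 \<le> f x y"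
  shows "f x0 y0 \<le> (\<Sum>x\<in>UNIV. \<Sum>y\<in>UNIV. f x y)"
proof -
  have "f x0 y0 \<le> (\<Sum>y\<in>UNIV. f x0 y)" by (rule member_le_sum) (auto simp: nn)
  also have "\<dots> \<le> (\<Sum>x\<in>UNIV. \<Sum>y\<in>UNIV. f x y)"
    by (rule member_le_sum) (auto simp: nn sum_nonneg)
  finally show ?thesis .
qed

lemma cnj_mult_self: "z * cnj z = complex_of_real ((cmod z)^2)"
  by (simp only: complex_norm_square)

theorem mainTheorem4:
  fixes \<psi> :: "'a::finite \<Rightarrow> 'b::finite \<Rightarrow> 'c::finite \<Rightarrow> complex"
  assumes "is_pure_state \<psi>"
  shows "G_ABC \<psi> \<le> S0_A \<psi> + S2_B \<psi>"
proof -
  obtain P where fx: "\<And>a b c. \<psi> a b c = (\<Sum>x\<in>UNIV. P a x * \<psi> x b c)"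
    and Pb: "(\<Sum>a\<in>UNIV. \<Sum>x\<in>UNIV. (cmod (P a x))\<^sup>2) \<le> real (rank (rho_A \<psi>))"
    using projector_exists[of \<psi>] by blast
  define r where "r = real (rank (rho_A \<psi>))"
  define F where "F = (\<Sum>a\<in>UNIV. \<Sum>x\<in>UNIV. (cmod (P a x))\<^sup>2)"
  define Zr where "Zr = (\<Sum>a0\<in>UNIV. \<Sum>a1\<in>UNIV. \<Sum>a2\<in>UNIV. \<Sum>a3\<in>UNIV. (cmod (Wf \<psi> a0 a1 a2 a3))\<^sup>2)"
  define T where "T = (\<Sum>a\<in>UNIV. \<Sum>a'\<in>UNIV. Wf \<psi> a a' a a')"
  define t where "t = Re (trace (rho_B \<psi> ** rho_B \<psi>))"
  have F0: "0 \<le> F" by (simp add: F_def sum_nonneg)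
  have Fr: "F \<le> r" using Pb by (simp add: F_def r_def)
  have Zr0: "0 \<le> Zr" by (simp add: Zr_def sum_nonneg)
  have ZZ: "Z_ABC \<psi> = complex_of_real Zr"
    by (simp only: Z_eq cnj_mult_self Zr_def of_real_sum)
  have ReZ: "Re (Z_ABC \<psi>) = Zr" by (simp add: ZZ)
  have tT: "t = Re T" by (simp add: t_def T_def trace_eq)
  have psi_nz: "\<exists>a b c. \<psi> a b c \<noteq> 0"
  proof (rule ccontr)
    assume "\<not> ?thesis"
    then have "\<And>a b c. \<psi> a b c = 0" by blast
    then show False using assms by (simp add: is_pure_state_def)
  qed
  then obtain a0 b0 c0 where nz: "\<psi> a0 b0 c0 \<noteq> 0" by blast
  have r_pos: "r > 0"
  proof (rule ccontr)
    assume "\<not> r > 0"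
    then have "F \<le> 0" using Fr by simp
    then have "F = 0" using F0 by simp
    then have "\<forall>a\<in>UNIV. (\<Sum>x\<in>UNIV. (cmod (P a x))\<^sup>2) = 0"
      unfolding F_def by (subst (asm) sum_nonneg_eq_0_iff) (auto intro: sum_nonneg)
    then have "\<And>a x. P a x = 0"
      by (metis (no_types, lifting) UNIV_I finite sum_nonneg_eq_0_iff zero_le_power2 norm_eq_zero power_eq_0_iff)
    then have "\<psi> a0 b0 c0 = 0" using fx[of a0 b0 c0] by simp
    then show False using nz by simp
  qed
  have t_pos: "t > 0"
  proof -
    define \<rho> where "\<rho> = rho_B \<psi>"
    have herm: "\<rho>$b'$b = cnj (\<rho>$b$b')" for b b'
      by (simp add: \<rho>_def rho_B_def cnj_sum mult.commute)
    have "trace (\<rho> ** \<rho>) = (\<Sum>b\<in>UNIV. \<Sum>b'\<in>UNIV. \<rho>$b$b' * \<rho>$b'$b)"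
      by (simp add: trace_def matrix_matrix_mult_def)
    also have "\<dots> = complex_of_real (\<Sum>b\<in>UNIV. \<Sum>b'\<in>UNIV. (cmod (\<rho>$b$b'))^2)"
    proof -
      have "\<rho>$b$b' * \<rho>$b'$b = complex_of_real ((cmod (\<rho>$b$b'))^2)" for b b'
        by (subst herm[of b' b]) (rule cnj_mult_self)
      then show ?thesis by (simp only: of_real_sum)
    qed
    finally have tr: "t = (\<Sum>b\<in>UNIV. \<Sum>b'\<in>UNIV. (cmod (\<rho>$b$b'))^2)"
      by (simp add: t_def \<rho>_def)
    have "\<rho>$b0$b0 = (\<Sum>a\<in>UNIV. \<Sum>c\<in>UNIV. \<psi> a b0 c * cnj (\<psi> a b0 c))"
      by (simp add: \<rho>_def rho_B_def)
    also have "\<dots> = complex_of_real (\<Sum>a\<in>UNIV. \<Sum>c\<in>UNIV. (cmod (\<psi> a b0 c))^2)"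
      by (simp only: cnj_mult_self of_real_sum)
    finally have rb: "\<rho>$b0$b0 = complex_of_real (\<Sum>a\<in>UNIV. \<Sum>c\<in>UNIV. (cmod (\<psi> a b0 c))^2)" .
    have "0 < (cmod (\<psi> a0 b0 c0))^2" using nz by simp
    also have "\<dots> \<le> (\<Sum>a\<in>UNIV. \<Sum>c\<in>UNIV. (cmod (\<psi> a b0 c))^2)"
      by (rule double_sum_ge) simp
    finally have pos: "0 < (\<Sum>a\<in>UNIV. \<Sum>c\<in>UNIV. (cmod (\<psi> a b0 c))^2)" .
    have "\<rho>$b0$b0 \<noteq> 0" using pos unfolding rb of_real_eq_0_iff by linarith
    then have "0 < (cmod (\<rho>$b0$b0))^2" by simp
    also have "\<dots> \<le> t" unfolding tr by (rule double_sum_ge) simp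
    finally show ?thesis .
  qed
  define h where "h = (\<lambda>(a::'a,a'::'a,x::'a,x'::'a). P a x * P a' x' * Wf \<psi> x x' a a')"
  define p where "p = (\<lambda>(a::'a,a'::'a,x::'a,x'::'a). cmod (P a x * P a' x'))"
  define w where "w = (\<lambda>(a::'a,a'::'a,x::'a,x'::'a). cmod (Wf \<psi> x x' a a'))"
  have T_exp: "T = (\<Sum>a\<in>UNIV. \<Sum>a'\<in>UNIV. \<Sum>x\<in>UNIV. \<Sum>x'\<in>UNIV. P a x * P a' x' * Wf \<psi> x x' a a')"
    unfolding T_def by (intro sum.cong refl) (rule Wf_proj[OF fx])
  have T_h: "T = sum h UNIV"
    unfolding T_exp by (simp only: sum_UNIV_pair h_def prod.case)
  have hpw: "cmod (h q) = p q * w q" for q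
    by (cases q) (auto simp: h_def p_def w_def norm_mult)
  have "cmod T \<le> (\<Sum>q\<in>UNIV. cmod (h q))" unfolding T_h by (rule norm_sum)
  also have "\<dots> = (\<Sum>q\<in>UNIV. p q * w q)" by (simp add: hpw)
  finally have T_le: "cmod T \<le> (\<Sum>q\<in>UNIV. p q * w q)" .
  have CS: "(\<Sum>q\<in>UNIV. p q * w q)\<^sup>2 \<le> (\<Sum>q\<in>UNIV. (p q)\<^sup>2) * (\<Sum>q\<in>UNIV. (w q)\<^sup>2)"
    by (rule Cauchy_Schwarz_ineq_sum)
  have p2: "(\<Sum>q\<in>UNIV. (p q)\<^sup>2) = F\<^sup>2"
  proof -
    have "(\<Sum>q\<in>UNIV. (p q)\<^sup>2) = (\<Sum>a\<in>UNIV. \<Sum>a'\<in>UNIV. \<Sum>x\<in>UNIV. \<Sum>x'\<in>UNIV. (cmod (P a x))\<^sup>2 * (cmod (P a' x'))\<^sup>2)"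
      by (simp only: sum_UNIV_pair p_def prod.case norm_mult power_mult_distrib)
    also have "\<dots> = F\<^sup>2"
      by (simp only: F_def power2_eq_square[of "sum _ _"] sum_product)
    finally show ?thesis .
  qed
  have w2: "(\<Sum>q\<in>UNIV. (w q)\<^sup>2) = Zr"
  proof -
    have "(\<Sum>q\<in>UNIV. (w q)\<^sup>2) = (\<Sum>a\<in>UNIV. \<Sum>a'\<in>UNIV. \<Sum>x\<in>UNIV. \<Sum>x'\<in>UNIV. (cmod (Wf \<psi> x x' a a'))\<^sup>2)"
      by (simp only: sum_UNIV_pair w_def prod.case)
    also have "\<dots> = Zr" unfolding Zr_def by (rule rot4)
    finally show ?thesis .
  qed
  have "t \<le> cmod T" using tT complex_Re_le_cmod by simp
  then have "t\<^sup>2 \<le> (cmod T)\<^sup>2" using t_pos by (intro power_mono) auto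
  also have "\<dots> \<le> (\<Sum>q\<in>UNIV. p q * w q)\<^sup>2" using T_le by (intro power_mono) auto
  also have "\<dots> \<le> F\<^sup>2 * Zr" using CS p2 w2 by simp
  also have "\<dots> \<le> r\<^sup>2 * Zr" using F0 Fr Zr0 by (intro mult_right_mono power_mono) auto
  finally have key: "t\<^sup>2 \<le> r\<^sup>2 * Zr" .
  have Zr_pos: "Zr > 0"
  proof (rule ccontr)
    assume "\<not> Zr > 0"
    then have "Zr = 0" using Zr0 by simp
    then show False using key t_pos by simp
  qed
  have "log 2 (t\<^sup>2) \<le> log 2 (r\<^sup>2 * Zr)"
    using key t_pos r_pos Zr_pos by (subst log_le_cancel_iff) auto
  moreover have "log 2 (t\<^sup>2) = 2 * log 2 t" using t_pos by (simp add: log_nat_power)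
  moreover have "log 2 (r\<^sup>2 * Zr) = 2 * log 2 r + log 2 Zr"
    using r_pos Zr_pos by (simp add: log_mult log_nat_power)
  ultimately have "2 * log 2 t \<le> 2 * log 2 r + log 2 Zr" by simp
  then show ?thesis
    unfolding G_ABC_def S0_A_def S2_B_def ReZ
    by (simp add: r_def[symmetric] t_def[symmetric])
qed

end
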